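(* Let $W_0$ be the set of ordinals $\le \Omega$, where $\Omega$ is the first uncountable ordinal, with the order topology, and let $W=W_0\setminus\{\Omega\}$ with the subspace topology. Then $(C(W,W_0),\tau_\Gamma)$ is not regular.
   Context: For topological spaces $X,Y$, $C(X,Y)$ denotes the set of continuous maps $X\to Y$; each $f\in C(X,Y)$ is identified with its graph $\{(x,f(x)):x\in X\}\subset X\times Y$. For $G$ open in $X\times Y$ let $F_G=\{f\in C(X,Y): f\subset G\}$. The graph topology $\tau_\Gamma$ on $C(X,Y)$ is the topology having the sets $F_G$ ($G$ open in $X\times Y$) as a base. *)

theory Defs
  imports "HOL-Analysis.Analysis"
begin

text \<open>C(X,Y): continuous maps X -> Y. A map is represented by a function that is
  extensional on the carrier of X, so that it is determined by its graph.\<close>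
definition cont_maps :: "'a topology \<Rightarrow> 'b topology \<Rightarrow> ('a \<Rightarrow> 'b) set" where
  "cont_maps X Y = {f. continuous_map X Y f \<and> f \<in> extensional (topspace X)}"

definition graph_of :: "'a topology \<Rightarrow> ('a \<Rightarrow> 'b) \<Rightarrow> ('a \<times> 'b) set" where
  "graph_of X f = {(x, f x) | x. x \<in> topspace X}"

definition graph_nbhd :: "'a topology \<Rightarrow> 'b topology \<Rightarrow> ('a \<times> 'b) set \<Rightarrow> ('a \<Rightarrow> 'b) set" where
  "graph_nbhd X Y G = {f \<in> cont_maps X Y. graph_of X f \<subseteq> G}"

definition graph_topology :: "'a topology \<Rightarrow> 'b topology \<Rightarrow> ('a \<Rightarrow> 'b) topology" where
  "graph_topology X Y =
     topology_generated_by {graph_nbhd X Y G | G. openin (prod_topology X Y) G}"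

end

theory Submission imports Defs begin

lemma count_bound:
  fixes \<Omega> :: "'a :: {wellorder, linorder_topology}"
  assumes uncount: "uncountable {..<\<Omega>}"
    and init_count: "\<forall>y < \<Omega>. countable {..<y}"
    and S: "countable S" "S \<subseteq> {..<\<Omega>}"
  shows "\<exists>z<\<Omega>. \<forall>s\<in>S. s < z"
proof (rule ccontr)
  assume "\<not> ?thesis"
  then have "\<forall>z<\<Omega>. \<exists>s\<in>S. z \<le> s" by (meson not_le)
  have "{..<\<Omega>} \<subseteq> (\<Union>s\<in>S. {..<s} \<union> {s})"
  proof
    fix z assume "z \<in> {..<\<Omega>}"
    then obtain s where "s \<in> S" "z \<le> s" using \<open>\<forall>z<\<Omega>. \<exists>s\<in>S. z \<le> s\<close> by auto
    then show "z \<in> (\<Union>s\<in>S. {..<s} \<union> {s})" by (auto simp: le_less)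
  qed
  moreover have "countable (\<Union>s\<in>S. {..<s} \<union> {s})"
    using S init_count by (intro countable_UN) auto
  ultimately show False using uncount countable_subset by blast
qed

lemma cont_upd:
  fixes p c :: "'a::linorder_topology"
  assumes "open {p}"
  shows "continuous_map (subtopology euclidean S) euclidean
           (\<lambda>x. if x \<in> S then (if x = p then c else x) else undefined)"
  unfolding continuous_map_def
proof (intro conjI allI impI)
  fix U :: "'a set" assume "openin euclidean U"
  then have oU: "open U" by simp
  have eq: "{x \<in> topspace (subtopology euclidean S).
      (if x \<in> S then (if x = p then c else x) else undefined) \<in> U}
      = ((U - {p}) \<union> (if c \<in> U then {p} else {})) \<inter> S"
    by auto
  have "open ((U - {p}) \<union> (if c \<in> U then {p} else {}))"
    using oU assms by (intro open_Un open_Diff) auto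
  then show "openin (subtopology euclidean S) {x \<in> topspace (subtopology euclidean S).
      (if x \<in> S then (if x = p then c else x) else undefined) \<in> U}"
    unfolding eq openin_subtopology by auto
qed auto

lemma base_lemma:
  assumes "generate_topology_on {graph_nbhd X Y G | G. openin (prod_topology X Y) G} Ob"
  shows "\<forall>f\<in>Ob. \<exists>G. openin (prod_topology X Y) G \<and> f \<in> graph_nbhd X Y G \<and> graph_nbhd X Y G \<subseteq> Ob"
  using assms
proof induction
  case (Int a b)
  show ?case
  proof
    fix f assume "f \<in> a \<inter> b"
    then obtain G1 G2 where "openin (prod_topology X Y) G1" "f \<in> graph_nbhd X Y G1" "graph_nbhd X Y G1 \<subseteq> a"
      "openin (prod_topology X Y) G2" "f \<in> graph_nbhd X Y G2" "graph_nbhd X Y G2 \<subseteq> b"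
      using Int.IH by blast
    then show "\<exists>G. openin (prod_topology X Y) G \<and> f \<in> graph_nbhd X Y G \<and> graph_nbhd X Y G \<subseteq> a \<inter> b"
      by (intro exI[of _ "G1 \<inter> G2"]) (auto simp: graph_nbhd_def)
  qed
next
  case (UN K)
  then show ?case by (meson Union_iff Union_upper subset_trans)
next
  case Empty
  then show ?case by simp
next
  case (Basis s)
  then show ?case by blast
qed

lemma column_lemma:
  fixes \<Omega> :: "'a :: {wellorder, linorder_topology}"
  assumes uncount: "uncountable {..<\<Omega>}"
    and init_count: "\<forall>y < \<Omega>. countable {..<y}"
    and H: "openin (prod_topology (subtopology euclidean {..<\<Omega>}) euclidean) H"
    and diag: "\<And>x. x < \<Omega> \<Longrightarrow> (x, x) \<in> H"
  shows "\<exists>p<\<Omega>. open {p} \<and> (\<forall>z<\<Omega>. \<exists>y. z < y \<and> y < \<Omega> \<and> (p, y) \<in> H)"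
proof (rule ccontr)
  assume "\<not> ?thesis"
  then have neg: "\<And>p. p < \<Omega> \<Longrightarrow> open {p} \<Longrightarrow> \<exists>z. z < \<Omega> \<and> (\<forall>y. z < y \<and> y < \<Omega> \<longrightarrow> (p, y) \<notin> H)"
    by (meson not_less)
  define \<phi> where "\<phi> p = (SOME z. z < \<Omega> \<and> (\<forall>y. z < y \<and> y < \<Omega> \<longrightarrow> (p, y) \<notin> H))" for p
  have \<phi>: "\<phi> p < \<Omega> \<and> (\<forall>y. \<phi> p < y \<and> y < \<Omega> \<longrightarrow> (p, y) \<notin> H)" if "p < \<Omega>" "open {p}" for p
    unfolding \<phi>_def using someI_ex[OF neg[OF that]] .
  have nx: "\<exists>z. z < \<Omega> \<and> \<alpha> < z \<and> (\<forall>p\<le>\<alpha>. open {p} \<longrightarrow> \<phi> p < z)" if "\<alpha> < \<Omega>" for \<alpha>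
  proof -
    let ?S = "insert \<alpha> (\<phi> ` {p. p \<le> \<alpha> \<and> open {p}})"
    have "countable {p. p \<le> \<alpha> \<and> open {p}}"
      by (rule countable_subset[of _ "insert \<alpha> {..<\<alpha>}"]) (use that init_count in \<open>auto simp: le_less\<close>)
    then have "countable ?S" by simp
    moreover have "?S \<subseteq> {..<\<Omega>}" using that \<phi> by auto
    ultimately obtain z where "z < \<Omega>" "\<forall>s\<in>?S. s < z"
      using count_bound[OF uncount init_count] by blast
    then show ?thesis by auto
  qed
  define nxt where "nxt \<alpha> = (SOME z. z < \<Omega> \<and> \<alpha> < z \<and> (\<forall>p\<le>\<alpha>. open {p} \<longrightarrow> \<phi> p < z))" for \<alpha>
  have nxt: "nxt \<alpha> < \<Omega> \<and> \<alpha> < nxt \<alpha> \<and> (\<forall>p\<le>\<alpha>. open {p} \<longrightarrow> \<phi> p < nxt \<alpha>)" if "\<alpha> < \<Omega>" for \<alpha>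
    unfolding nxt_def using someI_ex[OF nx[OF that]] .
  have "{..<\<Omega>} \<noteq> {}" using uncount by auto
  then obtain x0 where x0: "x0 < \<Omega>" by auto
  define a where "a n = rec_nat x0 (\<lambda>_ b. nxt b) n" for n
  have a0: "a 0 = x0" and aS: "a (Suc n) = nxt (a n)" for n by (simp_all add: a_def)
  have alt: "a n < \<Omega>" for n by (induction n) (use x0 nxt in \<open>auto simp: a0 aS\<close>)
  have sm: "strict_mono a" unfolding strict_mono_Suc_iff using nxt alt aS by auto
  then have amono: "m \<le> n \<Longrightarrow> a m \<le> a n" for m n by (simp add: strict_mono_less_eq)
  have "countable (range a)" by simp
  then obtain zb where zb: "zb < \<Omega>" "\<forall>n. a n < zb"
    using count_bound[OF uncount init_count, of "range a"] alt by blast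
  define lam where "lam = (LEAST z. \<forall>n. a n < z)"
  have lam_gt: "\<forall>n. a n < lam" unfolding lam_def by (rule LeastI[of _ zb]) (use zb in auto)
  have lam_le: "lam \<le> zb" unfolding lam_def by (rule Least_le) (use zb in auto)
  have below: "\<exists>n. w < a n" if "w < lam" for w
  proof -
    have "\<not> (\<forall>n. a n < w)" using not_less_Least[OF that[unfolded lam_def]] unfolding lam_def .
    then obtain n where "w \<le> a n" by (auto simp: not_less)
    also have "a n < a (Suc n)" using sm by (simp add: strict_mono_def)
    finally show ?thesis by blast
  qed
  have lamW: "lam < \<Omega>" using lam_le zb by simp
  then have "(lam, lam) \<in> H" by (rule diag)
  then have "\<exists>U V. openin (subtopology euclidean {..<\<Omega>}) U \<and> openin euclidean V \<and> lam \<in> U \<and> lam \<in> V \<and> U \<times> V \<subseteq> H"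
    by (rule openin_prod_topology_alt[THEN iffD1, OF H, rule_format])
  then obtain U V where UV: "openin (subtopology euclidean {..<\<Omega>}) U" "openin euclidean V" "lam \<in> U" "lam \<in> V" "U \<times> V \<subseteq> H"
    by blast
  obtain U0 where U0: "open U0" "U = U0 \<inter> {..<\<Omega>}" using UV(1) unfolding openin_subtopology by auto
  have lU0: "lam \<in> U0" using UV(3) U0(2) by simp
  obtain b1 where b1: "b1 < lam" "{b1<..lam} \<subseteq> U0"
    using open_left[OF U0(1) lU0 lam_gt[rule_format, of 0]] by blast
  have oV: "open V" using UV(2) by simp
  obtain b2 where b2: "b2 < lam" "{b2<..lam} \<subseteq> V"
    using open_left[OF oV UV(4) lam_gt[rule_format, of 0]] by blast
  obtain n1 where n1: "b1 < a n1" using below b1(1) by blast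
  obtain n2 where n2: "b2 < a n2" using below b2(1) by blast
  define N where "N = n1 + n2"
  have "a n1 \<le> a N" "a n2 \<le> a N" using amono unfolding N_def by simp_all
  then have b1N: "b1 < a N" and b2N: "b2 < a N" using n1 n2 by (meson order.strict_trans2)+
  define p where "p = (LEAST z. b1 < z)"
  have bp: "b1 < p" unfolding p_def by (rule LeastI[of _ "a N"]) (rule b1N)
  have pN: "p \<le> a N" unfolding p_def by (rule Least_le) (rule b1N)
  have aNS: "a N < a (Suc N)" using sm by (simp add: strict_monoD)
  have pSN: "p < a (Suc N)" using pN aNS by (rule le_less_trans)
  define q where "q = (LEAST z. p < z)"
  have pq: "p < q" unfolding q_def by (rule LeastI[of _ "a (Suc N)"]) (rule pSN)
  have "{b1<..<q} = {p}"
  proof (intro equalityI subsetI)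
    fix x assume "x \<in> {b1<..<q}"
    then have x: "b1 < x" "x < q" by auto
    have "\<not> x < p" using not_less_Least[of x "\<lambda>z. b1 < z"] x(1) unfolding p_def by blast
    moreover have "\<not> p < x" using not_less_Least[of x "\<lambda>z. p < z"] x(2) unfolding q_def by blast
    ultimately show "x \<in> {p}" by simp
  next
    fix x assume "x \<in> {p}"
    then show "x \<in> {b1<..<q}" using bp pq by simp
  qed
  then have op: "open {p}" by (metis open_greaterThanLessThan)
  have plam: "p < lam" using pN lam_gt le_less_trans by blast
  have pW: "p < \<Omega>" using plam lamW by simp
  have "p \<in> U" using b1 bp plam U0 pW by auto
  moreover have "a (Suc N) \<in> V"
    using b2 b2N lam_gt[rule_format, of "Suc N"] amono[of N "Suc N"] by (auto intro!: subsetD[OF b2(2)])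
  ultimately have inH: "(p, a (Suc N)) \<in> H" using UV(5) by blast
  have "\<phi> p < a (Suc N)" using nxt[OF alt[of N]] pN op aS by auto
  then show False using \<phi>[OF pW op] alt inH by blast
qed


theorem mainTheorem2:
  fixes \<Omega> :: "'a :: {wellorder, linorder_topology}"
  assumes top: "\<forall>x. x \<le> \<Omega>"
    and uncount: "uncountable {..<\<Omega>}"
    and init_count: "\<forall>y < \<Omega>. countable {..<y}"
  shows "\<not> regular_space (graph_topology (subtopology euclidean {..<\<Omega>}) (euclidean :: 'a topology))"
proof
  let ?W = "{..<\<Omega>}"
  let ?X = "subtopology euclidean ?W"
  let ?P = "prod_topology ?X (euclidean :: 'a topology)"
  let ?T = "graph_topology ?X (euclidean :: 'a topology)"
  define F where "F G = graph_nbhd ?X (euclidean :: 'a topology) G" for G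
  assume reg: "regular_space ?T"
  have topX: "topspace ?X = ?W" by simp
  have openT: "openin ?T (F G)" if "openin ?P G" for G
    unfolding graph_topology_def F_def openin_topology_generated_by_iff
    by (rule generate_topology_on.Basis) (use that in blast)
  have baseT: "\<exists>G. openin ?P G \<and> f \<in> F G \<and> F G \<subseteq> O'" if "openin ?T O'" "f \<in> O'" for O' f
    using base_lemma[OF that(1)[unfolded graph_topology_def openin_topology_generated_by_iff]] that(2)
    unfolding F_def by blast
  define mk where "mk p c = (\<lambda>x. if x \<in> ?W then (if x = p then c else x) else undefined)" for p c :: 'a
  have mk_cont: "mk p c \<in> cont_maps ?X euclidean" if "open {p}" for p c
    unfolding cont_maps_def mk_def using cont_upd[OF that, of ?W c] by (auto simp: extensional_def)
  define f where "f = (\<lambda>x. if x \<in> ?W then x else undefined)"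
  have fmk: "f = mk p p" for p unfolding f_def mk_def by auto
  have f_cont: "f \<in> cont_maps ?X euclidean"
  proof -
    have "continuous_map ?X euclidean id"
      by (rule continuous_map_from_subtopology[OF continuous_map_id])
    then have "continuous_map ?X euclidean f"
      by (rule continuous_map_eq) (simp add: f_def)
    then show ?thesis unfolding cont_maps_def f_def by (auto simp: extensional_def)
  qed
  define G0 where "G0 = ?W \<times> ?W"
  have oG0: "openin ?P G0" unfolding G0_def openin_prod_Times_iff
    by (metis open_lessThan open_openin openin_topspace topX)
  have oO: "openin ?T (F G0)" by (rule openT[OF oG0])
  have fO: "f \<in> F G0" unfolding F_def graph_nbhd_def graph_of_def G0_def using f_cont by (auto simp: f_def)
  have "closedin ?T (topspace ?T - F G0)" using oO by (simp add: closedin_diff)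
  moreover have "f \<in> topspace ?T - (topspace ?T - F G0)" using fO openin_subset[OF oO] by auto
  ultimately obtain U where U: "openin ?T U" "f \<in> U" "disjnt (topspace ?T - F G0) (?T closure_of U)"
    using reg unfolding regular_space[of ?T] by meson
  have clU: "?T closure_of U \<subseteq> F G0" using U(3) closure_of_subset_topspace[of ?T U] by (auto simp: disjnt_def)
  obtain H where H: "openin ?P H" "f \<in> F H" "F H \<subseteq> U" using baseT[OF U(1,2)] by blast
  have diag: "(x,x) \<in> H" if "x < \<Omega>" for x
  proof -
    have "(x, f x) \<in> graph_of ?X f" using that unfolding graph_of_def by auto
    then show ?thesis using H(2) that unfolding F_def graph_nbhd_def by (auto simp: f_def)
  qed
  obtain p where p: "p < \<Omega>" "open {p}" "\<forall>z<\<Omega>. \<exists>y. z<y \<and> y<\<Omega> \<and> (p,y)\<in>H"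
    using column_lemma[OF uncount init_count H(1) diag] by blast
  have gcont: "mk p \<Omega> \<in> cont_maps ?X euclidean" by (rule mk_cont[OF p(2)])
  have gtop: "mk p \<Omega> \<in> topspace ?T"
  proof -
    have "openin ?P (topspace ?P)" by (rule openin_topspace)
    then have "F (topspace ?P) \<subseteq> topspace ?T" using openT openin_subset by blast
    moreover have "mk p \<Omega> \<in> F (topspace ?P)" using gcont unfolding F_def graph_nbhd_def graph_of_def by (auto simp: mk_def)
    ultimately show ?thesis by blast
  qed
  have "mk p \<Omega> \<in> ?T closure_of F H"
    unfolding in_closure_of
  proof (intro conjI allI impI gtop)
    fix T0 assume T0: "mk p \<Omega> \<in> T0 \<and> openin ?T T0"
    then obtain G' where G': "openin ?P G'" "mk p \<Omega> \<in> F G'" "F G' \<subseteq> T0" using baseT by blast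
    have "(p, mk p \<Omega> p) \<in> graph_of ?X (mk p \<Omega>)" using p(1) unfolding graph_of_def by auto
    then have pG: "(p, \<Omega>) \<in> G'" using G'(2) p(1) unfolding F_def graph_nbhd_def mk_def by auto
    have "\<exists>U V. openin ?X U \<and> openin euclidean V \<and> p \<in> U \<and> \<Omega> \<in> V \<and> U \<times> V \<subseteq> G'"
      by (rule openin_prod_topology_alt[THEN iffD1, OF G'(1), rule_format, OF pG])
    then obtain U' V' where UV: "openin ?X U'" "openin euclidean V'" "p \<in> U'" "\<Omega> \<in> V'" "U' \<times> V' \<subseteq> G'" by blast
    have oV: "open V'" using UV(2) by simp
    obtain z where z: "z < \<Omega>" "{z<..\<Omega>} \<subseteq> V'" using open_left[OF oV UV(4) p(1)] by blast
    obtain y where y: "z < y" "y < \<Omega>" "(p,y) \<in> H" using p(3) z(1) by blast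
    have hc: "mk p y \<in> cont_maps ?X euclidean" by (rule mk_cont[OF p(2)])
    have "graph_of ?X (mk p y) \<subseteq> H"
    proof
      fix w assume "w \<in> graph_of ?X (mk p y)"
      then obtain x where x: "x < \<Omega>" "w = (x, mk p y x)" unfolding graph_of_def by auto
      show "w \<in> H" using x diag y(3) by (cases "x = p") (auto simp: mk_def)
    qed
    then have hH: "mk p y \<in> F H" using hc unfolding F_def graph_nbhd_def by auto
    have "graph_of ?X (mk p y) \<subseteq> G'"
    proof
      fix w assume "w \<in> graph_of ?X (mk p y)"
      then obtain x where x: "x < \<Omega>" "w = (x, mk p y x)" unfolding graph_of_def by auto
      show "w \<in> G'"
      proof (cases "x = p")
        case True
        then have "w = (p, y)" using x by (simp add: mk_def)
        moreover have "y \<in> V'" using y z by auto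
        ultimately show ?thesis using UV(3,5) by auto
      next
        case False
        have "(x, mk p \<Omega> x) \<in> graph_of ?X (mk p \<Omega>)" using x(1) unfolding graph_of_def by auto
        then have "(x, mk p \<Omega> x) \<in> G'" using G'(2) unfolding F_def graph_nbhd_def by auto
        then show ?thesis using x False by (simp add: mk_def)
      qed
    qed
    then have "mk p y \<in> F G'" using hc unfolding F_def graph_nbhd_def by auto
    then show "\<exists>h. h \<in> F H \<and> h \<in> T0" using hH G'(3) by blast
  qed
  then have "mk p \<Omega> \<in> ?T closure_of U" using closure_of_mono[OF H(3)] by blast
  then have "mk p \<Omega> \<in> F G0" using clU by blast
  moreover have "(p, mk p \<Omega> p) \<in> graph_of ?X (mk p \<Omega>)" using p(1) unfolding graph_of_def by auto
  ultimately have "(p, mk p \<Omega> p) \<in> G0" unfolding F_def graph_nbhd_def by auto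
  then show False unfolding G0_def mk_def using p(1) by simp
qed

end
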